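(* Let $p$ be a prime, let $r$ be a prime different from $p$, and let $a,c,t$ be positive integers with $t\ge 2$ such that $c$ is a primitive divisor of $p^a-1$ and $\gcd\big(\tfrac{p^a-1}{c},r\big)=1$. Suppose that either (i) $r=2$ and $p^a\equiv 1\pmod 4$, or (ii) $r$ is odd and the multiplicative order of $p^a$ modulo $r^t$ equals $r^h$ for some $0\le h\le t-1$. Then $$g\Big(\tfrac{p^{ar^t}-1}{c\,r^t},\,p^{ar^t}\Big)=r^t\,g\Big(\tfrac{p^a-1}{c},\,p^a\Big).$$
   Context: For a prime power $q$ and a positive integer $k$, the Waring number $g(k,q)$ is the smallest $s$ (if it exists) such that every element of $\mathbb{F}_q$ is a sum of $s$ $k$-th powers of elements of $\mathbb{F}_q$. An integer $e$ is a primitive divisor of $p^a-1$ if $e\mid p^a-1$ and $e\nmid p^s-1$ for every $1\le s<a$. *)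

theory Defs
  imports "HOL-Number_Theory.Number_Theory"
begin

definition sum_of_kth_powers :: "nat \<Rightarrow> nat \<Rightarrow> 'a::field \<Rightarrow> bool" where
  "sum_of_kth_powers k s y \<longleftrightarrow>
     (\<exists>xs :: 'a list. length xs = s \<and> sum_list (map (\<lambda>x. x ^ k) xs) = y)"

text \<open>Waring number g(k,q) of the finite field given by the type 'a (with q = CARD('a)):
  the least s such that every element is a sum of s k-th powers.\<close>
definition waring_number :: "nat \<Rightarrow> 'a::{finite,field} itself \<Rightarrow> nat" where
  "waring_number k (_ :: 'a itself) =
     (LEAST s. \<forall>y :: 'a. sum_of_kth_powers k s y)"

definition primitive_divisor :: "nat \<Rightarrow> nat \<Rightarrow> nat \<Rightarrow> bool" where
  "primitive_divisor e p a \<longleftrightarrow>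
     e dvd p ^ a - 1 \<and> (\<forall>s. 1 \<le> s \<and> s < a \<longrightarrow> \<not> e dvd p ^ s - 1)"

end

theory Submission
  imports Defs "HOL-Algebra.Multiplicative_Group" "HOL-Computational_Algebra.Polynomial"
begin

definition tyring :: "'a::field ring"
  where "tyring = \<lparr>carrier = UNIV, monoid.mult = (\<lambda>x y. x * y), one = 1, ring.zero = 0, add = (\<lambda> x y. x + y) \<rparr>"

lemma tyring_field: "field (tyring :: 'a::field ring)"
proof -
  have "\<exists>y. x + y = 0" for x :: 'a
    using add.right_inverse by blast
  moreover have "x \<noteq> 0 \<Longrightarrow> \<exists>y. x * y = 1" for x :: 'a
    by (rule exI[of _ "inverse x"]) auto
  ultimately show ?thesis
    unfolding tyring_def using add.right_inverse
    by unfold_locales (auto simp:algebra_simps Units_def)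
qed

lemma tc_pow: "x [^]\<^bsub>(tyring :: 'a::field ring)\<^esub> (n::nat) = x ^ n"
  by (induction n) (simp_all add: nat_pow_def tyring_def mult.commute)

lemma ff_gen:
  assumes "finite (UNIV :: 'a::field set)"
  shows "\<exists>g::'a. \<forall>x. x \<noteq> 0 \<longrightarrow> (\<exists>i::nat. x = g ^ i)"
proof -
  interpret K: field "tyring :: 'a ring" by (rule tyring_field)
  have "finite (carrier (tyring :: 'a ring))"
    using assms by (simp add: tyring_def)
  from K.finite_field_mult_group_has_gen[OF this] obtain g where
    g: "carrier (mult_of (tyring :: 'a ring)) = {g[^]\<^bsub>(tyring :: 'a ring)\<^esub> i | i::nat . i \<in> UNIV}"
    by blast
  show ?thesis
  proof (intro exI[of _ g] allI impI)
    fix x :: 'a assume "x \<noteq> 0"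
    hence "x \<in> carrier (mult_of (tyring :: 'a ring))"
      by (simp add: tyring_def)
    with g show "\<exists>i. x = g ^ i" by (auto simp: tc_pow)
  qed
qed

lemma ff_card_ge2: "card (UNIV :: 'a::{finite,field} set) \<ge> 2"
proof -
  have "card {0::'a, 1} \<le> card (UNIV :: 'a set)" by (rule card_mono) auto
  thus ?thesis by simp
qed

lemma ff_fermat: "(x::'a::{finite,field}) ^ card (UNIV :: 'a set) = x"
proof (cases "x = 0")
  case False
  have "x * (\<Prod>y\<in>UNIV-{0}. x * y) = x * x ^ (card (UNIV :: 'a set) - 1) * \<Prod>(UNIV-{0})"
    by (simp add: prod.distrib mult_ac)
  also have "x * x ^ (card (UNIV :: 'a set) - 1) = x ^ Suc (card (UNIV :: 'a set) - 1)"
    by (subst power_Suc) auto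
  also have "Suc (card (UNIV :: 'a set) - 1) = card (UNIV :: 'a set)"
    using finite_UNIV_card_ge_0[where ?'a = 'a] by simp
  also have "(\<Prod>y\<in>UNIV-{0}. x * y) = (\<Prod>y\<in>UNIV-{0}. y)"
    by (rule prod.reindex_bij_witness[of _ "\<lambda>y. y / x" "\<lambda>y. x * y"]) (use False in auto)
  finally show ?thesis
    by simp
qed (use finite_UNIV_card_ge_0[where ?'a = 'a] in auto)

lemma ff_fermat1: "(x::'a::{finite,field}) \<noteq> 0 \<Longrightarrow> x ^ (card (UNIV :: 'a set) - 1) = 1"
proof -
  assume x: "x \<noteq> 0"
  have n: "card (UNIV :: 'a set) = Suc (card (UNIV :: 'a set) - 1)"
    using ff_card_ge2[where 'a='a] by simp
  have "x * x ^ (card (UNIV :: 'a set) - 1) = x ^ card (UNIV :: 'a set)"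
    by (subst (2) n) simp
  also have "\<dots> = x * 1" by (simp add: ff_fermat)
  finally show ?thesis using x by simp
qed

lemma ff_fermat_pow: "(x::'a::{finite,field}) ^ (card (UNIV :: 'a set) ^ n) = x"
  by (induction n) (simp_all add: power_mult ff_fermat)

lemma ff_fermat_pow': "m = card (UNIV :: 'a set) ^ n \<Longrightarrow> (x::'a::{finite,field}) ^ m = x"
  using ff_fermat_pow by blast

lemma ff_char:
  assumes p: "prime p" and card: "card (UNIV :: 'a::{finite,field} set) = p ^ a"
  shows "CHAR('a) = p"
proof -
  have "(\<Sum>x\<in>(UNIV::'a set). x + 1) = (\<Sum>x\<in>UNIV. x)"
    by (rule sum.reindex_bij_witness[of _ "\<lambda>x. x - 1" "\<lambda>x. x + 1"]) auto
  hence "of_nat (card (UNIV :: 'a set)) = (0::'a)" by (simp add: sum.distrib)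
  hence d: "CHAR('a) dvd p ^ a" using card of_nat_eq_0_iff_char_dvd by metis
  have "card (UNIV :: 'a set) > 0" using ff_card_ge2[where 'a='a] by simp
  hence "CHAR('a) > 0" using \<open>of_nat (card (UNIV :: 'a set)) = (0::'a)\<close> CHAR_pos_iff by blast
  hence pc: "prime CHAR('a)" by (rule prime_CHAR_semidom)
  hence "CHAR('a) dvd p" using d prime_dvd_power by blast
  thus ?thesis using pc p primes_dvd_imp_eq by blast
qed

lemma ff_prime_char: "prime CHAR('a::{finite,field})"
proof -
  have "CHAR('a) > 0" by (rule finite_imp_CHAR_pos) simp
  thus ?thesis by (rule prime_CHAR_semidom)
qed

lemma ff_gen_nz: "\<exists>g::'a::{finite,field}. g \<noteq> 0 \<and> (\<forall>x. x \<noteq> 0 \<longrightarrow> (\<exists>i::nat. x = g ^ i))"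
proof -
  obtain g :: 'a where g: "\<forall>x. x \<noteq> 0 \<longrightarrow> (\<exists>i::nat. x = g ^ i)" using ff_gen[where 'a='a, OF finite_UNIV] by blast
  show ?thesis
  proof (cases "g = 0")
    case False thus ?thesis using g by blast
  next
    case True
    have "\<exists>i::nat. x = 1 ^ i" if x: "x \<noteq> 0" for x :: 'a
    proof -
      obtain i where i: "x = g ^ i" using g x by blast
      with x True have "x = 1" by (cases i) auto
      thus ?thesis by (intro exI[of _ 0]) simp
    qed
    thus ?thesis by (intro exI[of _ 1]) auto
  qed
qed

lemma ff_generator:
  obtains g :: "'a::{finite,field}" where "g \<noteq> 0"
    "\<And>x. x \<noteq> 0 \<Longrightarrow> \<exists>i<card (UNIV :: 'a set) - 1. x = g ^ i"
    "inj_on (\<lambda>i. g ^ i) {..<card (UNIV :: 'a set) - 1}"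
    "\<And>i. g ^ i = 1 \<longleftrightarrow> (card (UNIV :: 'a set) - 1) dvd i"
proof -
  define N where "N = card (UNIV :: 'a set) - 1"
  have N0: "N > 0" using ff_card_ge2[where 'a='a] unfolding N_def by simp
  obtain g :: 'a where g0: "g \<noteq> 0" and g: "\<And>x. x \<noteq> 0 \<Longrightarrow> \<exists>i::nat. x = g ^ i"
    using ff_gen_nz by blast
  have gN: "g ^ N = 1" unfolding N_def using g0 by (rule ff_fermat1)
  have gmod: "g ^ i = g ^ (i mod N)" for i
  proof -
    have "g ^ i = g ^ (N * (i div N) + i mod N)" by (metis mult.commute div_mult_mod_eq)
    also have "\<dots> = g ^ (i mod N)" by (simp only: power_add power_mult gN power_one mult_1)
    finally show ?thesis .
  qed
  have ex: "\<exists>i<N. x = g ^ i" if xn: "x \<noteq> 0" for x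
  proof -
    obtain i where "x = g ^ i" using g xn by blast
    thus ?thesis using gmod N0 by (intro exI[of _ "i mod N"]) auto
  qed
  have img: "(\<lambda>i. g ^ i) ` {..<N} = UNIV - {0}"
    using ex g0 by auto
  have "card (UNIV - {0::'a}) = N" unfolding N_def by (simp add: card_Diff_singleton)
  hence inj: "inj_on (\<lambda>i. g ^ i) {..<N}"
    using img by (intro eq_card_imp_inj_on) auto
  have ord: "g ^ i = 1 \<longleftrightarrow> N dvd i" for i
  proof
    assume "g ^ i = 1"
    hence "g ^ (i mod N) = g ^ 0" using gmod by simp
    hence "i mod N = 0" using inj_onD[OF inj, of "i mod N" 0] N0 by simp
    thus "N dvd i" by auto
  next
    assume "N dvd i" then obtain j where "i = N * j" by auto
    thus "g ^ i = 1" by (simp add: power_mult gN)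
  qed
  show ?thesis using that[OF g0 ex[unfolded N_def] inj[unfolded N_def] ord[unfolded N_def]] .
qed

lemma ff_subgroup:
  assumes kc: "k * c = card (UNIV :: 'a::{finite,field} set) - 1"
  obtains \<theta> :: "'a::{finite,field}" where "\<And>n. \<theta> ^ n = 1 \<longleftrightarrow> c dvd n"
    "\<And>y::'a. y ^ c = 1 \<longleftrightarrow> (\<exists>x. x \<noteq> 0 \<and> y = x ^ k)"
    "\<And>y::'a. y ^ c = 1 \<Longrightarrow> \<exists>i<c. y = \<theta> ^ i"
    "card {y::'a. y ^ c = 1} = c"
proof -
  define N where "N = card (UNIV :: 'a set) - 1"
  have N0: "N > 0" using ff_card_ge2[where 'a='a] unfolding N_def by simp
  obtain g :: 'a where g0: "g \<noteq> 0" and gex: "\<And>x. x \<noteq> 0 \<Longrightarrow> \<exists>i<N. x = g ^ i"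
    and inj: "inj_on (\<lambda>i. g ^ i) {..<N}" and ord: "\<And>i. g ^ i = 1 \<longleftrightarrow> N dvd i"
    unfolding N_def by (rule ff_generator) blast
  have kc': "k * c = N" using kc N_def by simp
  have k0: "k > 0" and c0: "c > 0" using kc' N0 by auto
  define \<theta> where "\<theta> = g ^ k"
  have A: "\<theta> ^ n = 1 \<longleftrightarrow> c dvd n" for n
    unfolding \<theta>_def power_mult[symmetric] ord kc'[symmetric] using k0 by simp
  have B: "y ^ c = 1 \<longleftrightarrow> (\<exists>x. x \<noteq> 0 \<and> y = x ^ k)" for y :: 'a
  proof
    assume y: "y ^ c = 1"
    have "y \<noteq> 0"
    proof
      assume "y = 0"
      then have "(0::'a) ^ c = 1" using y by simp
      moreover have "(0::'a) ^ c = 0" using c0 by (rule zero_power)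
      ultimately show False by simp
    qed
    then obtain i where i: "y = g ^ i" using gex by blast
    hence "g ^ (i * c) = 1" using y by (simp add: power_mult)
    hence "k * c dvd i * c" using ord kc' by simp
    hence "k dvd i" using c0 by simp
    then obtain j where "i = k * j" by auto
    hence "y = (g ^ j) ^ k" using i by (simp add: power_mult[symmetric] mult.commute)
    thus "\<exists>x. x \<noteq> 0 \<and> y = x ^ k" using g0 by (intro exI[of _ "g ^ j"]) simp
  next
    assume "\<exists>x. x \<noteq> 0 \<and> y = x ^ k"
    then obtain x where "x \<noteq> 0" "y = x ^ k" by blast
    thus "y ^ c = 1" using ff_fermat1[of x] kc by (simp add: power_mult[symmetric])
  qed
  have C: "\<exists>i<c. y = \<theta> ^ i" if y: "y ^ c = 1" for y
  proof -
    obtain x where x: "x \<noteq> 0" "y = x ^ k" using B y by blast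
    obtain i where i: "i < N" "x = g ^ i" using gex x(1) by blast
    have "\<theta> ^ c = 1" using A by simp
    have "y = \<theta> ^ i" unfolding x i \<theta>_def by (simp add: power_mult[symmetric] mult.commute)
    also have "\<dots> = \<theta> ^ (i mod c)"
    proof -
      have "\<theta> ^ i = \<theta> ^ (c * (i div c) + i mod c)" by (metis mult.commute div_mult_mod_eq)
      also have "\<dots> = \<theta> ^ (i mod c)" by (simp only: power_add power_mult \<open>\<theta> ^ c = 1\<close> power_one mult_1)
      finally show ?thesis .
    qed
    finally show ?thesis using c0 by (intro exI[of _ "i mod c"]) auto
  qed
  have D: "card {y::'a. y ^ c = 1} = c"
  proof -
    have "{y::'a. y ^ c = 1} = (\<lambda>i. \<theta> ^ i) ` {..<c}"
    proof
      show "{y. y ^ c = 1} \<subseteq> (\<lambda>i. \<theta> ^ i) ` {..<c}" using C by auto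
      show "(\<lambda>i. \<theta> ^ i) ` {..<c} \<subseteq> {y. y ^ c = 1}"
        using A by (auto simp: power_mult[symmetric] mult.commute)
    qed
    moreover have "inj_on (\<lambda>i. \<theta> ^ i) {..<c}"
    proof
      fix i j assume ij: "i \<in> {..<c}" "j \<in> {..<c}" "\<theta> ^ i = \<theta> ^ j"
      have "k * i < N" "k * j < N" using ij(1,2) kc' k0 by auto
      moreover have "g ^ (k * i) = g ^ (k * j)" using ij(3) unfolding \<theta>_def by (simp add: power_mult)
      ultimately have "k * i = k * j" using inj by (auto dest: inj_onD)
      thus "i = j" using k0 by simp
    qed
    ultimately show ?thesis by (simp add: card_image)
  qed
  show ?thesis using that[OF A B C D] .
qed


lemma one_plus_pow: "\<exists>B::int. (1 + z)^i = 1 + int i * z + z^2 * B"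
proof (induction i)
  case 0 show ?case by (intro exI[of _ 0]) simp
next
  case (Suc i)
  then obtain B where B: "(1 + z)^i = 1 + int i * z + z^2 * B" by blast
  show ?case
    by (intro exI[of _ "int i + B + B * z"]) (simp add: B algebra_simps power2_eq_square)
qed

lemma two_gauss: "2 * (\<Sum>i<n. i) = n * (n - 1 :: nat)"
proof (induction n)
  case (Suc n)
  thus ?case by (cases n) (simp_all add: algebra_simps)
qed simp

lemma lte_step:
  fixes r m :: nat and u :: int
  assumes r: "prime r" and m: "m \<ge> 1" and odd: "odd r \<or> m \<ge> 2" and u: "\<not> int r dvd u"
  shows "\<exists>u'. (1 + int r ^ m * u) ^ r = 1 + int r ^ (m + 1) * u' \<and> \<not> int r dvd u'"
proof -
  define z where "z = int r ^ m * u"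
  define x where "x = 1 + z"
  obtain B where B: "\<And>i. (1 + z)^i = 1 + int i * z + z^2 * B i"
    using one_plus_pow[of z] by metis
  define G where "G = (\<Sum>i<r. i)"
  have G2: "2 * G = r * (r - 1)" unfolding G_def by (rule two_gauss)
  have S: "(\<Sum>i<r. x^i) = int r + z * int G + z^2 * (\<Sum>i<r. B i)"
    unfolding x_def B by (simp add: sum.distrib sum_distrib_left sum_distrib_right G_def algebra_simps)
  have "int r ^ 2 dvd z * int G"
  proof (cases "m \<ge> 2")
    case True
    hence "int r ^ 2 dvd int r ^ m" by (simp add: le_imp_power_dvd)
    thus ?thesis unfolding z_def by (simp add: mult.assoc)
  next
    case False
    with m have m1: "m = 1" by simp
    with odd False have "odd r" by simp
    then obtain k where k: "r = 2 * k + 1" by (meson oddE)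
    hence "G = r * k" using G2 by simp
    thus ?thesis unfolding z_def m1 by (simp add: power2_eq_square)
  qed
  moreover have "int r ^ 2 dvd z^2"
    unfolding z_def using m
    by (simp add: power_mult_distrib)
  ultimately have "int r ^ 2 dvd z * int G + z^2 * (\<Sum>i<r. B i)" by (simp add: dvd_add)
  then obtain Y where Y: "z * int G + z^2 * (\<Sum>i<r. B i) = int r ^ 2 * Y" by (auto simp: dvd_def)
  have "x ^ r = 1 + (x - 1) * (\<Sum>i<r. x^i)"
    using power_diff_1_eq[of x r] by simp
  also have "(x - 1) * (\<Sum>i<r. x^i) = z * (int r + (z * int G + z^2 * (\<Sum>i<r. B i)))"
    by (simp only: S) (simp add: x_def)
  also have "\<dots> = z * (int r + int r^2 * Y)" by (simp only: Y)
  also have "1 + \<dots> = 1 + int r ^ (m+1) * (u * (1 + int r * Y))"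
    unfolding z_def by (simp add: algebra_simps power2_eq_square)
  finally have eq: "x ^ r = 1 + int r ^ (m+1) * (u * (1 + int r * Y))" .
  have rp: "prime (int r)" using r by simp
  have "\<not> int r dvd u * (1 + int r * Y)"
  proof
    assume "int r dvd u * (1 + int r * Y)"
    hence "int r dvd u \<or> int r dvd (1 + int r * Y)" using rp prime_dvd_mult_iff by blast
    moreover have "\<not> int r dvd (1 + int r * Y)"
    proof
      assume "int r dvd (1 + int r * Y)"
      hence "int r dvd 1" by (simp add: dvd_add_left_iff)
      with rp show False by (simp add: prime_int_iff)
    qed
    ultimately show False using u by blast
  qed
  with eq show ?thesis unfolding x_def z_def by blast
qed

lemma lte_iter:
  fixes r m :: nat and u :: int
  assumes r: "prime r" and m: "m \<ge> 1" and odd: "odd r \<or> m \<ge> 2" and u: "\<not> int r dvd u"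
  shows "\<exists>u'. (1 + int r ^ m * u) ^ (r ^ j) = 1 + int r ^ (m + j) * u' \<and> \<not> int r dvd u'"
proof (induction j)
  case 0 show ?case using u by auto
next
  case (Suc j)
  then obtain u' where u': "(1 + int r ^ m * u) ^ (r ^ j) = 1 + int r ^ (m + j) * u'" "\<not> int r dvd u'" by blast
  have "\<exists>u''. (1 + int r ^ (m+j) * u') ^ r = 1 + int r ^ (m + j + 1) * u'' \<and> \<not> int r dvd u''"
    using lte_step[OF r _ _ u'(2), of "m + j"] m odd by auto
  then obtain u'' where
    "(1 + int r ^ (m+j) * u') ^ r = 1 + int r ^ (m + j + 1) * u''" "\<not> int r dvd u''" by blast
  moreover have "(1 + int r ^ m * u) ^ (r ^ Suc j) = ((1 + int r ^ m * u) ^ (r ^ j)) ^ r"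
    by (simp add: power_mult[symmetric] mult.commute)
  ultimately show ?case using u'(1) by (intro exI[of _ u'']) simp
qed

lemma nt_main:
  fixes q r c t :: nat
  assumes r: "prime r" and q: "q \<ge> 2" and t: "t \<ge> 1" and c: "c > 0" "c dvd q - 1"
    and cop: "coprime ((q - 1) div c) r" and rq: "r dvd q - 1" and r2: "r = 2 \<longrightarrow> 4 dvd q - 1"
  shows "c * r ^ t dvd q ^ (r ^ t) - 1"
    and "\<And>d. 0 < d \<Longrightarrow> d < r ^ t \<Longrightarrow> \<not> c * r ^ t dvd q ^ d - 1"
proof -
  have q1: "q - 1 \<noteq> 0" using q by simp
  have nu: "\<not> is_unit r" using prime_gt_1_nat[OF r] by auto
  obtain u where u: "q - 1 = r ^ multiplicity r (q - 1) * u" "\<not> r dvd u"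
    by (rule multiplicity_decompose'[OF q1 nu])
  define v where "v = multiplicity r (q - 1)"
  have u': "q - 1 = r ^ v * u" using u(1) v_def by simp
  have v1: "v \<ge> 1"
  proof (rule ccontr)
    assume "\<not> v \<ge> 1" hence "v = 0" by simp
    with u' rq u(2) show False by simp
  qed
  have v2: "odd r \<or> v \<ge> 2"
  proof (cases "r = 2")
    case True
    have four: "4 dvd q - 1" using r2 True by blast
    show ?thesis
    proof (rule ccontr)
      assume "\<not> (odd r \<or> v \<ge> 2)"
      with v1 have "v = 1" by simp
      with True u' have "q - 1 = 2 * u" by simp
      with four have "4 dvd 2 * u" by simp
      moreover have "4 dvd 2 * u \<Longrightarrow> 2 dvd u" for u :: nat by presburger
      ultimately have "2 dvd u" by blast
      with u(2) True show False by simp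
    qed
  next
    case False
    have "r > 2" using prime_ge_2_nat[OF r] False by simp
    hence "odd r" using prime_odd_nat[OF r] by blast
    thus ?thesis by simp
  qed
  have qint: "int q = 1 + int r ^ v * int u"
  proof -
    have "int q = int (q - 1) + 1" using q by simp
    thus ?thesis using u' by simp
  qed
  have ru: "\<not> int r dvd int u" using u(2) by simp
  have ex: "r ^ (v + j) dvd q ^ (r ^ j) - 1 \<and> \<not> r ^ (v + j + 1) dvd q ^ (r ^ j) - 1" for j
  proof -
    obtain w where w: "int q ^ (r ^ j) = 1 + int r ^ (v + j) * w" "\<not> int r dvd w"
      using lte_iter[OF r v1 v2 ru, of j] qint by metis
    have ge: "q ^ (r ^ j) \<ge> 1" using q by simp
    have eq: "int (q ^ (r ^ j) - 1) = int r ^ (v + j) * w"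
      using w(1) ge by (simp add: of_nat_diff)
    have "int (r ^ (v + j)) dvd int (q ^ (r ^ j) - 1)" unfolding eq by simp
    moreover have "\<not> int (r ^ (v + j + 1)) dvd int (q ^ (r ^ j) - 1)"
    proof
      assume "int (r ^ (v + j + 1)) dvd int (q ^ (r ^ j) - 1)"
      hence "int r ^ (v + j) * int r dvd int r ^ (v + j) * w" unfolding eq by simp
      hence "int r dvd w" using r by (subst (asm) dvd_times_left_cancel_iff) (auto simp: prime_gt_0_nat)
      with w(2) show False by simp
    qed
    ultimately show ?thesis by (metis int_dvd_int_iff)
  qed
  define m0 where "m0 = (q - 1) div c"
  have qm: "q - 1 = c * m0" using c unfolding m0_def by simp
  have "r ^ v dvd c * m0" unfolding qm[symmetric] u' by simp
  moreover have "coprime (r ^ v) m0" using cop unfolding m0_def by (simp add: coprime_commute)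
  ultimately have "r ^ v dvd c" by (simp add: coprime_dvd_mult_left_iff)
  then obtain c0 where c0: "c = r ^ v * c0" by (auto simp: dvd_def)
  have rc0: "\<not> r dvd c0"
  proof
    assume "r dvd c0"
    then obtain e where "c0 = r * e" by (auto simp: dvd_def)
    hence "r ^ v * r dvd r ^ v * u" unfolding u'[symmetric] qm c0 by simp
    hence "r dvd u" using r by (subst (asm) dvd_times_left_cancel_iff) (auto simp: prime_gt_0_nat)
    with u(2) show False by simp
  qed
  have cop2: "coprime (r ^ (v + t)) c0"
    using rc0 r by (simp add: prime_imp_coprime)
  have crt: "c * r ^ t = r ^ (v + t) * c0" using c0 by (simp add: power_add algebra_simps)
  have qdvd: "q - 1 dvd q ^ n - 1" for n
  proof -
    have "int q - 1 dvd int q ^ n - 1" using power_diff_1_eq[of "int q" n] by simp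
    moreover have ge1: "1 \<le> q" "1 \<le> q ^ n" using q by simp_all
    moreover have "int (q - 1) = int q - 1" "int (q ^ n - 1) = int q ^ n - 1"
      using of_nat_diff[OF ge1(1)] of_nat_diff[OF ge1(2)] by simp_all
    ultimately show ?thesis by (metis int_dvd_int_iff)
  qed
  have A: "r ^ (v + t) dvd q ^ (r ^ t) - 1" using ex[of t] by blast
  have "c0 dvd c" using c0 by simp
  hence "c0 dvd q ^ (r ^ t) - 1"
    using dvd_trans[OF dvd_trans[OF _ c(2)] qdvd[of "r ^ t"]] by blast
  then show "c * r ^ t dvd q ^ (r ^ t) - 1" unfolding crt by (rule divides_mult[OF A _ cop2])
  fix d assume d: "0 < d" "d < r ^ t"
  show "\<not> c * r ^ t dvd q ^ d - 1"
  proof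
    assume "c * r ^ t dvd q ^ d - 1"
    hence "r ^ (v + t) dvd q ^ d - 1" unfolding crt by (meson dvd_mult_left)
    hence "[q ^ d = 1] (mod r ^ (v + t))" using q by (subst cong_altdef_nat) auto
    hence o1: "ord (r ^ (v + t)) q dvd d" by (simp add: ord_divides')
    have "[q ^ (r ^ t) = 1] (mod r ^ (v + t))" using A q by (subst cong_altdef_nat) auto
    hence "ord (r ^ (v + t)) q dvd r ^ t" by (simp add: ord_divides')
    then obtain s where s: "s \<le> t" "ord (r ^ (v + t)) q = r ^ s" using divides_primepow_nat[OF r] by auto
    show False
    proof (cases "s = t")
      case True
      with o1 s have "r ^ t dvd d" by simp
      with d show False by (simp add: nat_dvd_not_less)
    next
      case False
      with s have "r ^ s dvd r ^ (t - 1)" by (simp add: le_imp_power_dvd)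
      with s have "ord (r ^ (v + t)) q dvd r ^ (t - 1)" by simp
      hence "[q ^ (r ^ (t - 1)) = 1] (mod r ^ (v + t))" by (simp add: ord_divides')
      hence "r ^ (v + t) dvd q ^ (r ^ (t - 1)) - 1" using q by (subst (asm) cong_altdef_nat) auto
      moreover have "v + (t - 1) + 1 = v + t" using t by simp
      ultimately show False using ex[of "t - 1"] by metis
    qed
  qed
qed


lemma map_poly_hom_add:
  assumes "h 0 = 0" "\<And>x y. h (x + y) = h x + h y"
  shows "map_poly h (P + Q) = map_poly h P + map_poly h Q"
  by (rule poly_eqI) (simp add: coeff_map_poly assms)

lemma map_poly_hom_mult:
  fixes h :: "'a::comm_ring_1 \<Rightarrow> 'b::comm_ring_1"
  assumes h0: "h 0 = 0" and ha: "\<And>x y. h (x + y) = h x + h y" and hm: "\<And>x y. h (x * y) = h x * h y"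
  shows "map_poly h (P * Q) = map_poly h P * map_poly h Q"
proof (induction P)
  case 0 show ?case by simp
next
  case (pCons a P)
  have "map_poly h (pCons a P * Q) = map_poly h (smult a Q + pCons 0 (P * Q))" by simp
  also have "\<dots> = smult (h a) (map_poly h Q) + pCons 0 (map_poly h P * map_poly h Q)"
    by (simp add: map_poly_hom_add[OF h0 ha] map_poly_smult[OF h0 hm] map_poly_pCons[of h, OF h0] h0 pCons.IH)
  also have "\<dots> = map_poly h (pCons a P) * map_poly h Q"
    by (simp add: map_poly_pCons[of h, OF h0])
  finally show ?case .
qed

lemma map_poly_hom_prod:
  fixes h :: "'a::comm_ring_1 \<Rightarrow> 'b::comm_ring_1"
  assumes h0: "h 0 = 0" and h1: "h 1 = 1" and ha: "\<And>x y. h (x + y) = h x + h y" and hm: "\<And>x y. h (x * y) = h x * h y"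
  shows "map_poly h (\<Prod>i\<in>A. P i) = (\<Prod>i\<in>A. map_poly h (P i))"
proof (induction A rule: infinite_finite_induct)
  case (infinite A) thus ?case by (simp add: h1)
next
  case empty thus ?case by (simp add: h1)
next
  case (insert x F) thus ?case by (simp add: map_poly_hom_mult[OF h0 ha hm])
qed

lemma poly_map_hom:
  fixes h :: "'a::comm_ring_1 \<Rightarrow> 'b::comm_ring_1"
  assumes h0: "h 0 = 0" and ha: "\<And>x y. h (x + y) = h x + h y" and hm: "\<And>x y. h (x * y) = h x * h y"
  shows "poly (map_poly h P) (h x) = h (poly P x)"
  by (induction P) (simp_all add: map_poly_pCons[of h, OF h0] ha hm h0)

abbreviation ip :: "int poly \<Rightarrow> 'a::comm_ring_1 poly" where "ip f \<equiv> map_poly of_int f"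

lemma ip_add: "ip (f + g) = (ip f + ip g :: 'a::comm_ring_1 poly)"
  by (rule map_poly_hom_add) simp_all

lemma ip_mult: "ip (f * g) = (ip f * ip g :: 'a::comm_ring_1 poly)"
  by (rule map_poly_hom_mult) simp_all

lemma ip_diff: "ip (f - g) = (ip f - ip g :: 'a::comm_ring_1 poly)"
  by (rule poly_eqI) (simp add: coeff_map_poly)

lemma ip_1: "ip 1 = (1 :: 'a::comm_ring_1 poly)"
  by simp

lemma ip_monom: "ip (monom 1 n) = (monom 1 n :: 'a::comm_ring_1 poly)"
  by (simp add: map_poly_monom)

lemma of_int_frob:
  assumes p: "prime p" "CHAR('a::field) = p"
  shows "(of_int z :: 'a) ^ (p ^ i) = of_int z"
proof -
  have pc: "prime CHAR('a)" using p by simp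
  have nat_case: "(of_nat j :: 'a) ^ (p ^ i) = of_nat j" for j
  proof (induction j)
    case 0 show ?case using p by (simp add: prime_gt_0_nat)
  next
    case (Suc j)
    have "(of_nat (Suc j) :: 'a) ^ (p ^ i) = (of_nat j + 1) ^ (p ^ i)" by (simp add: add.commute)
    also have "\<dots> = of_nat j ^ (p ^ i) + 1 ^ (p ^ i)"
      by (rule freshmans_dream'[OF pc]) (simp add: p)
    finally show ?case using Suc by simp
  qed
  have "(of_int z :: 'a) = of_int (z mod int p) + of_int (int p * (z div int p))"
    by (metis of_int_add mult_div_mod_eq add.commute)
  also have "of_int (int p * (z div int p)) = (0 :: 'a)" using p(2)[symmetric] by simp
  also have "z mod int p = int (nat (z mod int p))" using p by (simp add: prime_gt_0_nat)
  finally have "(of_int z :: 'a) = of_nat (nat (z mod int p))" by simp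
  thus ?thesis using nat_case by simp
qed

lemma frob_add:
  assumes p: "prime p" "CHAR('a::field) = p"
  shows "((x::'a) + y) ^ (p ^ i) = x ^ (p ^ i) + y ^ (p ^ i)"
  by (rule freshmans_dream') (simp_all add: p)

lemma poly_ip_frob:
  assumes p: "prime p" "CHAR('a::field) = p"
  shows "poly (ip f) ((x::'a) ^ (p ^ i)) = (poly (ip f) x) ^ (p ^ i)"
proof -
  define h where "h = (\<lambda>y::'a. y ^ (p ^ i))"
  have h0: "h 0 = 0" unfolding h_def using p by (simp add: prime_gt_0_nat)
  have ha: "h (x + y) = h x + h y" for x y unfolding h_def by (rule frob_add[OF p])
  have hm: "h (x * y) = h x * h y" for x y unfolding h_def by (simp add: power_mult_distrib)
  have "map_poly h (ip f) = (ip f :: 'a poly)"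
    by (rule poly_eqI) (simp add: coeff_map_poly h0, simp add: h_def of_int_frob[OF p])
  hence "poly (ip f) (h x) = h (poly (ip f) x)"
    using poly_map_hom[OF h0 ha hm, of "ip f" x] by simp
  thus ?thesis unfolding h_def .
qed

lemma prime_field:
  assumes p: "prime p" "CHAR('a::field) = p" and x: "(x::'a) ^ p = x"
  shows "\<exists>z. x = of_int z"
proof -
  define P :: "'a poly" where "P = monom 1 p - monom 1 1"
  have p1: "p > 1" using prime_gt_1_nat[OF p(1)] by simp
  have cP: "coeff P p = 1" unfolding P_def using p1 by simp
  hence P0: "P \<noteq> 0" by auto
  have dP: "degree P \<le> p" unfolding P_def
    by (rule degree_diff_le) (use p1 degree_monom_le[of "1::'a" 1] degree_monom_le[of "1::'a" p] in auto)
  define S where "S = (\<lambda>j. of_nat j :: 'a) ` {..<p}"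
  have "inj_on (\<lambda>j. of_nat j :: 'a) {..<p}"
  proof
    fix i j assume ij: "i \<in> {..<p}" "j \<in> {..<p}" "(of_nat i :: 'a) = of_nat j"
    show "i = j"
    proof (rule ccontr)
      assume "i \<noteq> j"
      then consider "i < j" | "j < i" by linarith
      thus False
      proof cases
        case 1
        hence "p dvd j - i" using ij of_nat_eq_iff_char_dvd[OF 1, where 'a='a] p by simp
        moreover have "0 < j - i" "j - i < p" using 1 ij by auto
        ultimately show False by (simp add: nat_dvd_not_less)
      next
        case 2
        hence "p dvd i - j" using ij of_nat_eq_iff_char_dvd[OF 2, where 'a='a] p by simp
        moreover have "0 < i - j" "i - j < p" using 2 ij by auto
        ultimately show False by (simp add: nat_dvd_not_less)
      qed
    qed
  qed
  hence cS: "card S = p" unfolding S_def by (simp add: card_image)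
  have rootsS: "S \<subseteq> {y. poly P y = 0}"
  proof
    fix y assume "y \<in> S"
    then obtain j where "y = of_nat j" unfolding S_def by blast
    hence "y = of_int (int j)" by simp
    hence "y ^ p = y" using of_int_frob[OF p, of "int j" 1] by simp
    thus "y \<in> {y. poly P y = 0}" unfolding P_def by (simp add: poly_monom)
  qed
  have "card {y. poly P y = 0} \<le> p" using card_poly_roots_bound[OF P0] dP by linarith
  moreover have fin: "finite {y. poly P y = 0}" using poly_roots_finite[OF P0] .
  ultimately have "S = {y. poly P y = 0}"
    using card_mono[of "{y. poly P y = 0}" S] rootsS cS by (intro card_subset_eq) auto
  moreover have "x \<in> {y. poly P y = 0}" using x unfolding P_def by (simp add: poly_monom)
  ultimately obtain j where "x = of_nat j" unfolding S_def by blast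
  thus ?thesis by (intro exI[of _ "int j"]) simp
qed

lemma of_int_transfer:
  assumes "CHAR('a::ring_1) = CHAR('b::ring_1)"
  shows "(of_int z = (0::'a)) \<longleftrightarrow> (of_int z = (0::'b))"
  using assms by (simp add: of_int_eq_0_iff_char_dvd)

lemma ip_transfer:
  assumes "CHAR('a::comm_ring_1) = CHAR('b::comm_ring_1)" and "ip g = (0 :: 'a poly)"
  shows "ip g = (0 :: 'b poly)"
proof (rule poly_eqI)
  fix n
  have "coeff (ip g :: 'a poly) n = 0" using assms(2) by simp
  hence "(of_int (coeff g n) :: 'a) = 0" by (simp add: coeff_map_poly)
  hence "(of_int (coeff g n) :: 'b) = 0" using of_int_transfer[OF assms(1)] by blast
  thus "coeff (ip g :: 'b poly) n = coeff 0 n" by (simp add: coeff_map_poly)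
qed


lemma conj_distinct:
  fixes \<gamma> :: "'a::{finite,field}"
  assumes p: "prime p" and cF: "card (UNIV :: 'a set) = p ^ a"
    and g0: "\<gamma> \<noteq> 0" and ord: "\<And>i. \<gamma> ^ i = 1 \<longleftrightarrow> (card (UNIV :: 'a set) - 1) dvd i"
  shows "inj_on (\<lambda>i. \<gamma> ^ (p ^ i)) {..<a}"
proof -
  have p1: "p > 1" using prime_gt_1_nat[OF p] .
  have key: False if ij: "i < j" "j < a" and eq: "\<gamma> ^ (p ^ i) = \<gamma> ^ (p ^ j)" for i j
  proof -
    have le: "p ^ i \<le> p ^ j" using ij p1 by (simp add: power_increasing)
    have "\<gamma> ^ (p ^ j) = \<gamma> ^ (p ^ i) * \<gamma> ^ (p ^ j - p ^ i)"
      using le by (simp add: power_add[symmetric])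
    hence "\<gamma> ^ (p ^ j - p ^ i) = 1" using eq g0 by simp
    hence d: "p ^ a - 1 dvd p ^ j - p ^ i" using ord cF by simp
    have "p ^ j - p ^ i = p ^ i * (p ^ (j - i) - 1)"
      using ij by (simp add: diff_mult_distrib2 power_add[symmetric])
    with d have "p ^ a - 1 dvd p ^ i * (p ^ (j - i) - 1)" by simp
    moreover have "coprime (p ^ a - 1) (p ^ i)"
    proof -
      have "coprime (p ^ a - 1) p"
      proof (rule coprimeI)
        fix d assume "d dvd p ^ a - 1" "d dvd p"
        moreover have "a > 0" using ij by simp
        ultimately have "d dvd p ^ a" "d dvd p ^ a - 1" by (auto intro: dvd_power[of a p, THEN dvd_trans[rotated]])
        moreover have "p ^ a \<ge> 1" using p1 by simp
        ultimately have "d dvd 1" by (metis dvd_diff_nat diff_diff_cancel)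
        thus "is_unit d" by simp
      qed
      thus ?thesis by simp
    qed
    ultimately have "p ^ a - 1 dvd p ^ (j - i) - 1" by (simp add: coprime_dvd_mult_right_iff)
    moreover have "p ^ (j - i) - 1 > 0" using one_less_power[OF p1, of "j - i"] ij by simp
    moreover have "p ^ (j - i) < p ^ a" using ij p1 by (intro power_strict_increasing) auto
    ultimately show False by (meson diff_less_mono dvd_imp_le leD less_imp_diff_less one_le_power p1 less_imp_le nat_dvd_not_less zero_less_diff)
  qed
  show ?thesis
  proof (rule inj_onI)
    fix i j assume "i \<in> {..<a}" "j \<in> {..<a}" "\<gamma> ^ (p ^ i) = \<gamma> ^ (p ^ j)"
    thus "i = j" using key[of i j] key[of j i] by (cases i j rule: linorder_cases) auto
  qed
qed

definition liftc :: "'a::ring_1 \<Rightarrow> int" where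
  "liftc c = (if c = 0 then 0 else (SOME z. c = of_int z))"

lemma ip_liftc:
  assumes "\<And>n. \<exists>z. coeff P n = (of_int z :: 'a::comm_ring_1)"
  shows "ip (map_poly liftc P) = P"
proof (rule poly_eqI)
  fix n
  have l0: "liftc (0::'a) = 0" by (simp add: liftc_def)
  have "coeff (ip (map_poly liftc P) :: 'a poly) n = of_int (liftc (coeff P n))"
    by (simp add: coeff_map_poly l0)
  also have "\<dots> = coeff P n"
  proof (cases "coeff P n = 0")
    case True thus ?thesis by (simp add: liftc_def)
  next
    case False
    hence "liftc (coeff P n) = (SOME z. coeff P n = of_int z)" by (simp add: liftc_def)
    moreover have "coeff P n = of_int (SOME z. coeff P n = of_int z)"
      using someI_ex[OF assms[of n]] .
    ultimately show ?thesis by simp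
  qed
  finally show "coeff (ip (map_poly liftc P)) n = coeff P n" .
qed

lemma frob_hom:
  assumes p: "prime p" "CHAR('a::field) = p"
  shows "(0::'a) ^ p = 0" "(1::'a) ^ p = 1" "\<And>x y::'a. (x + y) ^ p = x ^ p + y ^ p"
    "\<And>x y::'a. (x * y) ^ p = x ^ p * y ^ p"
  using frob_add[OF p, of _ _ 1] p by (auto simp: prime_gt_0_nat power_mult_distrib)

theorem embedding:
  fixes p a R :: nat
  assumes p: "prime p" and cF: "card (UNIV::'F::{finite,field} set) = p ^ a"
    and cE: "card (UNIV :: 'E::{finite,field} set) = (p ^ a) ^ R"
  obtains \<phi> :: "'F::{finite,field} \<Rightarrow> 'E::{finite,field}" where "inj \<phi>" "\<And>x y. \<phi> (x + y) = \<phi> x + \<phi> y"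
    "\<And>x y. \<phi> (x * y) = \<phi> x * \<phi> y" "\<phi> 0 = 0" "\<phi> 1 = 1"
proof -
  have charF: "CHAR('F) = p" by (rule ff_char[OF p cF])
  have charE: "CHAR('E) = p" by (rule ff_char[OF p, of "a * R"]) (simp add: cE power_mult)
  have chars: "CHAR('F) = CHAR('E)" using charF charE by simp
  have p1: "p > 1" using prime_gt_1_nat[OF p] .
  have a0: "a > 0"
  proof (rule ccontr)
    assume "\<not> a > 0" hence "card (UNIV :: 'F set) = 1" using cF by simp
    thus False using ff_card_ge2[where 'a='F] by simp
  qed
  obtain \<gamma> :: 'F where g0: "\<gamma> \<noteq> 0" and gex: "\<And>x. x \<noteq> 0 \<Longrightarrow> \<exists>i<card (UNIV :: 'F set) - 1. x = \<gamma> ^ i"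
    and ord: "\<And>i. \<gamma> ^ i = 1 \<longleftrightarrow> (card (UNIV :: 'F set) - 1) dvd i"
    by (rule ff_generator) blast
  have conj: "inj_on (\<lambda>i. \<gamma> ^ (p ^ i)) {..<a}" by (rule conj_distinct[OF p cF g0 ord])
  define Fr :: "'F \<Rightarrow> 'F" where "Fr = (\<lambda>x. x ^ p)"
  note fh = frob_hom[OF p charF]
  have Fr0: "Fr 0 = 0" and Fr1: "Fr 1 = 1" and Fra: "\<And>x y. Fr (x + y) = Fr x + Fr y"
    and Frm: "\<And>x y. Fr (x * y) = Fr x * Fr y" unfolding Fr_def using fh by auto
  have Frneg: "Fr (- x) = - Fr x" for x unfolding Fr_def
    by (rule minus_power_prime_CHAR) (simp_all add: charF p)
  define lin :: "nat \<Rightarrow> 'F poly" where "lin = (\<lambda>i. [:-(\<gamma> ^ (p ^ i)), 1:])"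
  define mF where "mF = (\<Prod>i<a. lin i)"
  have lin0: "lin i \<noteq> 0" for i unfolding lin_def by simp
  have mF0: "mF \<noteq> 0" unfolding mF_def using lin0 by simp
  have dmF: "degree mF \<le> a"
  proof -
    have "degree mF \<le> sum (degree \<circ> lin) {..<a}" unfolding mF_def by (rule degree_prod_sum_le) simp
    also have "\<dots> = a" by (simp add: lin_def)
    finally show ?thesis .
  qed
  have rootmF: "poly mF (\<gamma> ^ (p ^ i)) = 0" if "i < a" for i
    unfolding mF_def poly_prod using that by (intro prod_zero[of "{..<a}"]) (auto simp: lin_def intro!: bexI[of _ i])
  have FrmF: "map_poly Fr mF = mF"
  proof -
    have "map_poly Fr mF = (\<Prod>i<a. map_poly Fr (lin i))"
      unfolding mF_def by (rule map_poly_hom_prod[OF Fr0 Fr1 Fra Frm])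
    also have "\<dots> = (\<Prod>i<a. lin (Suc i))"
    proof (rule prod.cong[OF refl])
      fix i
      have "map_poly Fr (lin i) = [:Fr (-(\<gamma> ^ (p ^ i))), Fr 1:]"
        unfolding lin_def by (simp add: map_poly_pCons[of Fr, OF Fr0] Fr0)
      also have "\<dots> = lin (Suc i)"
        unfolding lin_def Frneg Fr1 by (simp add: Fr_def power_mult[symmetric] mult.commute)
      finally show "map_poly Fr (lin i) = lin (Suc i)" .
    qed
    also have "\<dots> = mF"
    proof -
      have la: "lin a = lin 0"
      proof -
        have "\<gamma> ^ (p ^ a) = \<gamma>" using ff_fermat[of \<gamma>] cF by simp
        thus ?thesis by (simp add: lin_def)
      qed
      have "lin 0 * (\<Prod>i<a. lin (Suc i)) = (\<Prod>i<Suc a. lin i)"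
        by (simp only: prod.lessThan_Suc_shift)
      also have "\<dots> = mF * lin 0" by (simp add: mF_def la)
      finally have "lin 0 * (\<Prod>i<a. lin (Suc i)) = lin 0 * mF" by (simp add: mult.commute)
      thus ?thesis using lin0[of 0] by simp
    qed
    finally show ?thesis .
  qed
  have primecoeff: "\<exists>z. c = of_int z" if "c ^ p = c" for c :: 'F
    by (rule prime_field[OF p charF that])
  have mFcoeff: "\<exists>z. coeff mF n = of_int z" for n
  proof -
    have "coeff (map_poly Fr mF) n = Fr (coeff mF n)" by (simp add: coeff_map_poly Fr0)
    hence "(coeff mF n) ^ p = coeff mF n" using FrmF by (simp add: Fr_def)
    thus ?thesis by (rule primecoeff)
  qed
  define mI where "mI = map_poly liftc mF"
  have ipmI: "ip mI = mF" unfolding mI_def by (rule ip_liftc[OF mFcoeff])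
  have Fr_ip: "map_poly Fr (ip f) = ip f" for f
    by (rule poly_eqI) (simp add: coeff_map_poly Fr0, simp add: Fr_def of_int_frob[OF p charF, of _ 1, simplified])
  have D2: "\<exists>h. (ip f :: 'E poly) = ip mI * ip h" if f: "poly (ip f) \<gamma> = (0::'F)" for f
  proof -
    define fF :: "'F poly" where "fF = ip f"
    have rootf: "poly fF (\<gamma> ^ (p ^ i)) = 0" for i
      unfolding fF_def poly_ip_frob[OF p charF] f using p1 by simp
    define hF where "hF = fF div mF"
    define r where "r = fF mod mF"
    have fhr: "fF = hF * mF + r" unfolding hF_def r_def by simp
    have rootr: "poly r (\<gamma> ^ (p ^ i)) = 0" if "i < a" for i
    proof -
      have "r = fF - hF * mF" using fhr by simp
      thus ?thesis using rootf[of i] rootmF[OF that] by simp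
    qed
    have r0: "r = 0"
    proof (rule ccontr)
      assume rn: "r \<noteq> 0"
      hence "degree r < degree mF" using degree_mod_less[OF mF0, of fF] unfolding r_def by auto
      with dmF have dr: "degree r < a" by simp
      have "(\<lambda>i. \<gamma> ^ (p ^ i)) ` {..<a} \<subseteq> {x. poly r x = 0}" using rootr by auto
      hence "card ((\<lambda>i. \<gamma> ^ (p ^ i)) ` {..<a}) \<le> card {x. poly r x = 0}"
        by (intro card_mono poly_roots_finite rn)
      moreover have "card ((\<lambda>i. \<gamma> ^ (p ^ i)) ` {..<a}) = a" using conj by (simp add: card_image)
      moreover have "card {x. poly r x = 0} \<le> degree r" by (rule card_poly_roots_bound[OF rn])
      ultimately show False using dr by simp
    qed
    have fh: "fF = hF * mF" using fhr r0 by simp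
    have "map_poly Fr hF * mF = hF * mF"
    proof -
      have "map_poly Fr hF * mF = map_poly Fr hF * map_poly Fr mF" using FrmF by simp
      also have "\<dots> = map_poly Fr fF" unfolding fh by (rule map_poly_hom_mult[OF Fr0 Fra Frm, symmetric])
      also have "\<dots> = fF" unfolding fF_def by (rule Fr_ip)
      finally show ?thesis using fh by simp
    qed
    hence FrhF: "map_poly Fr hF = hF" using mF0 by simp
    have hFcoeff: "\<exists>z. coeff hF n = of_int z" for n
    proof -
      have "coeff (map_poly Fr hF) n = Fr (coeff hF n)" by (simp add: coeff_map_poly Fr0)
      hence "(coeff hF n) ^ p = coeff hF n" using FrhF by (simp add: Fr_def)
      thus ?thesis by (rule primecoeff)
    qed
    define hI where "hI = map_poly liftc hF"
    have iphI: "ip hI = hF" unfolding hI_def by (rule ip_liftc[OF hFcoeff])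
    have "ip (f - mI * hI) = (0 :: 'F poly)"
      unfolding ip_diff ip_mult ipmI iphI fF_def[symmetric] fh by simp
    hence "ip (f - mI * hI) = (0 :: 'E poly)" by (rule ip_transfer[OF chars])
    hence "(ip f :: 'E poly) = ip mI * ip hI" unfolding ip_diff ip_mult by simp
    thus ?thesis by blast
  qed
  define Q where "Q = card (UNIV :: 'E set)"
  have Q2: "Q \<ge> 2" unfolding Q_def by (rule ff_card_ge2)
  define X :: "int poly" where "X = monom 1 Q - monom 1 1"
  have ipXF: "(ip X :: 'F poly) = monom 1 Q - monom 1 1"
    unfolding X_def ip_diff ip_monom ..
  have ipXE: "(ip X :: 'E poly) = monom 1 Q - monom 1 1"
    unfolding X_def ip_diff ip_monom ..
  have Xg: "poly (ip X) \<gamma> = (0::'F)"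
  proof -
    have "\<gamma> ^ Q = \<gamma>" unfolding Q_def cE cF[symmetric] by (rule ff_fermat_pow)
    thus ?thesis unfolding ipXF by (simp add: poly_monom)
  qed
  obtain hX where hX: "(ip X :: 'E poly) = ip mI * ip hX" using D2[OF Xg] by blast
  have degm: "degree (ip mI :: 'E poly) \<ge> 1"
  proof (rule ccontr)
    assume "\<not> degree (ip mI :: 'E poly) \<ge> 1"
    hence d0: "degree (ip mI :: 'E poly) = 0" by simp
    have "coeff mF n = 0" if "n > 0" for n
    proof -
      have "coeff (ip mI :: 'E poly) n = 0" using d0 that by (simp add: coeff_eq_0)
      hence "(of_int (coeff mI n) :: 'E) = 0" by (simp add: coeff_map_poly)
      hence "(of_int (coeff mI n) :: 'F) = 0" using of_int_transfer[OF chars] by blast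
      thus ?thesis unfolding ipmI[symmetric] by (simp add: coeff_map_poly)
    qed
    hence "degree mF \<le> 0" by (intro degree_le) auto
    hence "[:coeff mF 0:] = mF" by (intro degree_0_id) simp
    moreover have "poly mF \<gamma> = 0" using rootmF[OF a0] by simp
    moreover have "poly [:coeff mF 0:] \<gamma> = coeff mF 0" by simp
    ultimately have "coeff mF 0 = 0" by simp
    with \<open>[:coeff mF 0:] = mF\<close> have "mF = 0" by simp
    with mF0 show False by simp
  qed
  have "\<exists>\<delta>::'E. poly (ip mI) \<delta> = 0"
  proof (rule ccontr)
    assume nr: "\<not> (\<exists>\<delta>::'E. poly (ip mI) \<delta> = 0)"
    have allroot: "poly (ip hX) e = (0::'E)" for e
    proof -
      have "poly (ip X) e = (0::'E)" unfolding ipXE using ff_fermat[of e] by (simp add: poly_monom Q_def)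
      hence "poly (ip mI * ip hX) e = (0::'E)" using hX by simp
      hence "poly (ip mI) e * poly (ip hX) e = (0::'E)" by (simp only: poly_mult)
      thus ?thesis using nr by simp
    qed
    have X0: "(ip X :: 'E poly) \<noteq> 0"
    proof
      assume "(ip X :: 'E poly) = 0"
      hence "coeff (ip X :: 'E poly) Q = 0" by simp
      thus False unfolding ipXE using Q2 by simp
    qed
    have h0: "(ip hX :: 'E poly) \<noteq> 0" using X0 hX by auto
    have m0: "(ip mI :: 'E poly) \<noteq> 0" using X0 hX by auto
    have "degree (ip X :: 'E poly) \<le> Q" unfolding ipXE
      by (rule degree_diff_le) (use Q2 degree_monom_le[of "1::'E" Q] degree_monom_le[of "1::'E" 1] in auto)
    hence "degree (ip mI :: 'E poly) + degree (ip hX :: 'E poly) \<le> Q"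
      using hX degree_mult_eq[OF m0 h0] by simp
    with degm have dh: "degree (ip hX :: 'E poly) < Q" by simp
    have "{x. poly (ip hX) x = (0::'E)} = UNIV" using allroot by auto
    hence "Q \<le> degree (ip hX :: 'E poly)" using card_poly_roots_bound[OF h0] unfolding Q_def by simp
    with dh show False by simp
  qed
  then obtain \<delta> :: 'E where delta: "poly (ip mI) \<delta> = 0" by blast
  define eF :: "int poly \<Rightarrow> 'F" where "eF = (\<lambda>f. poly (ip f) \<gamma>)"
  define eE :: "int poly \<Rightarrow> 'E" where "eE = (\<lambda>f. poly (ip f) \<delta>)"
  have wd: "eE f = eE g" if "eF f = eF g" for f g
  proof -
    have "poly (ip (f - g)) \<gamma> = (0::'F)" using that unfolding eF_def ip_diff by simp
    then obtain h where "(ip (f - g) :: 'E poly) = ip mI * ip h" using D2 by blast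
    hence "poly (ip (f - g)) \<delta> = (0::'E)" using delta by simp
    thus ?thesis unfolding eE_def ip_diff by simp
  qed
  have surj: "\<exists>f. eF f = x" for x
  proof (cases "x = 0")
    case True thus ?thesis by (intro exI[of _ 0]) (simp add: eF_def)
  next
    case False
    then obtain i where "x = \<gamma> ^ i" using gex by blast
    thus ?thesis by (intro exI[of _ "monom 1 i"]) (simp add: eF_def ip_monom poly_monom)
  qed
  define \<phi> where "\<phi> = (\<lambda>x. eE (SOME f. eF f = x))"
  have phi_ev: "\<phi> (eF f) = eE f" for f
  proof -
    have "eF (SOME g. eF g = eF f) = eF f" by (rule someI_ex) blast
    thus ?thesis unfolding \<phi>_def by (rule wd)
  qed
  have add: "\<phi> (x + y) = \<phi> x + \<phi> y" for x y
  proof -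
    obtain f where f: "x = eF f" using surj by metis
    obtain g where g: "y = eF g" using surj by metis
    note fg = f g
    have "x + y = eF (f + g)" unfolding fg eF_def ip_add by simp
    moreover have "eE (f + g) = eE f + eE g" unfolding eE_def ip_add by simp
    ultimately show ?thesis using phi_ev fg by simp
  qed
  have mul: "\<phi> (x * y) = \<phi> x * \<phi> y" for x y
  proof -
    obtain f where f: "x = eF f" using surj by metis
    obtain g where g: "y = eF g" using surj by metis
    note fg = f g
    have "x * y = eF (f * g)" unfolding fg eF_def ip_mult by simp
    moreover have "eE (f * g) = eE f * eE g" unfolding eE_def ip_mult by simp
    ultimately show ?thesis using phi_ev fg by simp
  qed
  have z: "\<phi> 0 = 0" using phi_ev[of 0] by (simp add: eF_def eE_def)
  have o: "\<phi> 1 = 1" using phi_ev[of 1] by (simp add: eF_def eE_def)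
  have inj: "inj \<phi>"
  proof (rule injI)
    fix x y assume xy: "\<phi> x = \<phi> y"
    show "x = y"
    proof (rule ccontr)
      assume "x \<noteq> y"
      hence "(x - y) * inverse (x - y) = 1" by simp
      hence "\<phi> (x - y) * \<phi> (inverse (x - y)) = 1" using mul o by metis
      moreover have "\<phi> (x - y) = 0"
      proof -
        have "\<phi> (x - y) + \<phi> y = \<phi> x" using add[of "x - y" y] by simp
        thus ?thesis using xy by simp
      qed
      ultimately show False by simp
    qed
  qed
  show ?thesis using that[OF inj add mul z o] .
qed


lemma sum_split_nat: fixes a b :: nat shows "(\<Sum>j<a+b. f j) = (\<Sum>j<a. f j) + (\<Sum>j<b. f (a + j))"
  by (induction b) (simp_all add: add.assoc)

lemma sum_blocks: fixes m n :: nat shows "(\<Sum>j<m*n. f j) = (\<Sum>i<m. \<Sum>l<n. f (i*n + l))"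
proof (induction m)
  case 0 show ?case by simp
next
  case (Suc m)
  have "(\<Sum>j<Suc m * n. f j) = (\<Sum>j<m*n + n. f j)" by (simp add: add.commute)
  also have "\<dots> = (\<Sum>j<m*n. f j) + (\<Sum>l<n. f (m*n + l))" by (rule sum_split_nat)
  finally show ?case using Suc by simp
qed

lemma sok_iff: "sum_of_kth_powers k s (y::'a::field) \<longleftrightarrow> (\<exists>f::nat \<Rightarrow> 'a. (\<Sum>j<s. f j ^ k) = y)"
proof
  assume "sum_of_kth_powers k s y"
  then obtain xs :: "'a list" where xs: "length xs = s" "sum_list (map (\<lambda>x. x ^ k) xs) = y"
    unfolding sum_of_kth_powers_def by blast
  have "sum_list (map (\<lambda>x. x ^ k) xs) = (\<Sum>j<s. (xs ! j) ^ k)"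
    using xs(1) by (simp add: sum_list_sum_nth atLeast0LessThan)
  thus "\<exists>f::nat \<Rightarrow> 'a. (\<Sum>j<s. f j ^ k) = y" using xs(2) by (intro exI[of _ "nth xs"]) simp
next
  assume "\<exists>f::nat \<Rightarrow> 'a. (\<Sum>j<s. f j ^ k) = y"
  then obtain f :: "nat \<Rightarrow> 'a" where f: "(\<Sum>j<s. f j ^ k) = y" by blast
  have "sum_list (map (\<lambda>x. x ^ k) (map f [0..<s])) = (\<Sum>j<s. f j ^ k)"
    by (simp add: sum_list_sum_nth atLeast0LessThan)
  thus "sum_of_kth_powers k s y" unfolding sum_of_kth_powers_def using f
    by (intro exI[of _ "map f [0..<s]"]) simp
qed

lemma sok_mono:
  assumes "sum_of_kth_powers k s (y::'a::field)" "s \<le> s'" "k > 0"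
  shows "sum_of_kth_powers k s' y"
proof -
  obtain f :: "nat \<Rightarrow> 'a" where f: "(\<Sum>j<s. f j ^ k) = y" using assms(1) sok_iff by blast
  define g where "g = (\<lambda>j. if j < s then f j else 0)"
  have "(\<Sum>j<s'. g j ^ k) = (\<Sum>j<s + (s' - s). g j ^ k)" using assms(2) by simp
  also have "\<dots> = (\<Sum>j<s. g j ^ k) + (\<Sum>j<s'-s. g (s + j) ^ k)" by (rule sum_split_nat)
  also have "(\<Sum>j<s'-s. g (s + j) ^ k) = 0" using assms(3) by (simp add: g_def)
  also have "(\<Sum>j<s. g j ^ k) = y" using f by (simp add: g_def)
  finally show ?thesis using sok_iff by auto
qed

lemma sok_finite_sum:
  assumes "finite J"
  shows "sum_of_kth_powers k (card J) ((\<Sum>j\<in>J. f j ^ k) :: 'a::field)"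
proof -
  obtain h where h: "bij_betw h {0..<card J} J" using ex_bij_betw_nat_finite[OF assms] by blast
  have "(\<Sum>j\<in>J. f j ^ k) = (\<Sum>i\<in>{0..<card J}. f (h i) ^ k)"
    using sum.reindex_bij_betw[OF h, of "\<lambda>j. f j ^ k"] by simp
  thus ?thesis unfolding sok_iff atLeast0LessThan by (intro exI[of _ "f \<circ> h"]) simp
qed

lemma waring_eqI:
  assumes "\<And>y::'a::{finite,field}. sum_of_kth_powers k s y"
    and "\<And>s'. (\<forall>y::'a. sum_of_kth_powers k s' y) \<Longrightarrow> s \<le> s'"
  shows "waring_number k TYPE('a) = s"
  unfolding waring_number_def by (rule Least_equality) (use assms in auto)

definition agroup :: "'a::ab_group_add monoid" where
  "agroup = \<lparr>carrier = UNIV, mult = (+), one = 0\<rparr>"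

lemma agroup_group: "group (agroup :: 'a::ab_group_add monoid)"
  by (rule groupI) (auto simp: agroup_def add.assoc intro: exI[of _ "- x" for x])

lemma add_lagrange:
  assumes T0: "(0::'a::{finite,ab_group_add}) \<in> T" and Tadd: "\<And>x y. x \<in> T \<Longrightarrow> y \<in> T \<Longrightarrow> x + y \<in> T"
    and Tneg: "\<And>x. x \<in> T \<Longrightarrow> - x \<in> T"
  shows "card T dvd card (UNIV :: 'a set)"
proof -
  interpret G: group "agroup :: 'a monoid" by (rule agroup_group)
  have inv: "inv\<^bsub>(agroup :: 'a monoid)\<^esub> x = - x" for x :: 'a
    by (rule G.inv_equality) (simp_all add: agroup_def)
  have "subgroup T (agroup :: 'a monoid)"
    by (rule G.subgroupI) (use T0 Tadd Tneg inv[unfolded agroup_def] in \<open>auto simp: agroup_def\<close>)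
  from G.lagrange[OF this] have "card (rcosets\<^bsub>(agroup :: 'a monoid)\<^esub> T) * card T = card (UNIV :: 'a set)"
    by (simp add: Coset.order_def agroup_def)
  thus ?thesis by (metis dvd_triv_right)
qed

lemma waring_exists:
  fixes k c p a :: nat
  assumes p: "prime p" and cF: "card (UNIV::'a::{finite,field} set) = p ^ a"
    and kc: "k * c = card (UNIV::'a set) - 1" and prim: "primitive_divisor c p a"
  shows "\<exists>s. \<forall>y::'a. sum_of_kth_powers k s y"
proof -
  define T where "T = {y::'a. \<exists>s. sum_of_kth_powers k s y}"
  have N0: "card (UNIV::'a set) - 1 > 0" using ff_card_ge2[where 'a='a] by simp
  have k0: "k > 0" using kc N0 by (cases k) auto
  have c0: "c > 0" using kc N0 by (cases c) auto
  have T0: "0 \<in> T" unfolding T_def sok_iff by (intro CollectI exI[of _ 0]) simp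
  have Tpow: "x ^ k \<in> T" for x :: 'a
    unfolding T_def sok_iff by (intro CollectI exI[of _ 1] exI[of _ "\<lambda>_. x"]) simp
  have Tadd: "x + y \<in> T" if "x \<in> T" "y \<in> T" for x y
  proof -
    have "\<exists>s (f::nat \<Rightarrow> 'a). (\<Sum>j<s. f j ^ k) = x" using \<open>x \<in> T\<close> unfolding T_def sok_iff by simp
    then obtain s1 and f :: "nat \<Rightarrow> 'a" where f: "(\<Sum>j<s1. f j ^ k) = x" by blast
    have "\<exists>s (f::nat \<Rightarrow> 'a). (\<Sum>j<s. f j ^ k) = y" using \<open>y \<in> T\<close> unfolding T_def sok_iff by simp
    then obtain s2 and g :: "nat \<Rightarrow> 'a" where g: "(\<Sum>j<s2. g j ^ k) = y" by blast
    define h where "h = (\<lambda>j. if j < s1 then f j else g (j - s1))"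
    have "(\<Sum>j<s1+s2. h j ^ k) = (\<Sum>j<s1. h j ^ k) + (\<Sum>j<s2. h (s1 + j) ^ k)" by (rule sum_split_nat)
    also have "\<dots> = x + y" using f g by (simp add: h_def)
    finally show ?thesis unfolding T_def sok_iff by blast
  qed
  have Tsum: "(\<Sum>j<n. F j) \<in> T" if "\<And>j. F j \<in> T" for F :: "nat \<Rightarrow> 'a" and n :: nat
    using that by (induction n) (simp_all add: T0 Tadd)
  have Tmul: "x * y \<in> T" if "x \<in> T" "y \<in> T" for x y
  proof -
    have "\<exists>s (f::nat \<Rightarrow> 'a). (\<Sum>j<s. f j ^ k) = x" using \<open>x \<in> T\<close> unfolding T_def sok_iff by simp
    then obtain s1 and f :: "nat \<Rightarrow> 'a" where f: "(\<Sum>j<s1. f j ^ k) = x" by blast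
    have "\<exists>s (f::nat \<Rightarrow> 'a). (\<Sum>j<s. f j ^ k) = y" using \<open>y \<in> T\<close> unfolding T_def sok_iff by simp
    then obtain s2 and g :: "nat \<Rightarrow> 'a" where g: "(\<Sum>j<s2. g j ^ k) = y" by blast
    have "x * y = (\<Sum>j<s1. \<Sum>l<s2. (f j * g l) ^ k)"
      unfolding f[symmetric] g[symmetric] by (simp add: sum_distrib_left sum_distrib_right power_mult_distrib sum.swap[of _ "{..<s2}"])
    also have "\<dots> \<in> T" by (intro Tsum Tpow)
    finally show ?thesis .
  qed
  have charp: "CHAR('a) = p" by (rule ff_char[OF p cF])
  have Tnat: "of_nat n * x \<in> T" if "x \<in> T" for n x
    using that by (induction n) (simp_all add: T0 Tadd algebra_simps)
  have Tneg: "- x \<in> T" if "x \<in> T" for x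
  proof -
    have p0: "p \<ge> 1" using prime_gt_1_nat[OF p] by simp
    have "(of_nat p :: 'a) = 0" using charp by (metis of_nat_CHAR)
    hence "of_nat (p - 1) * x + x = 0" using p0 by (simp add: of_nat_diff algebra_simps)
    hence "- x = of_nat (p - 1) * x" by (metis add_eq_0_iff2 minus_unique add.commute)
    thus ?thesis using Tnat[OF that] by simp
  qed
  have dv: "card T dvd p ^ a" using add_lagrange[OF T0 Tadd Tneg] cF by simp
  then obtain b where b: "b \<le> a" "card T = p ^ b" using divides_primepow_nat[OF p] by blast
  have one: "(1::'a) \<in> T" using Tpow[of 1] by simp
  have "card {0::'a, 1} \<le> card T" using T0 one by (intro card_mono) auto
  hence cT2: "card T \<ge> 2" by simp
  have b1: "b \<ge> 1" using b cT2 by (cases b) auto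
  have "b = a"
  proof (rule ccontr)
    assume "b \<noteq> a" hence ba: "b < a" using b by simp
    obtain \<theta> :: 'a where A: "\<And>n. \<theta> ^ n = 1 \<longleftrightarrow> c dvd n"
      and B: "\<And>y::'a. y ^ c = 1 \<longleftrightarrow> (\<exists>x. x \<noteq> 0 \<and> y = x ^ k)"
      by (rule ff_subgroup[OF kc]) blast
    have "\<theta> ^ c = 1" using A by simp
    then obtain x where "x \<noteq> 0" "\<theta> = x ^ k" using B by blast
    hence thT: "\<theta> \<in> T" and th0: "\<theta> \<noteq> 0" using Tpow by auto
    define T' where "T' = T - {0}"
    have finT': "finite T'" by simp
    have "\<theta> ^ card T' = 1"
    proof -
      have img: "(\<lambda>y. \<theta> * y) ` T' = T'"
      proof (rule card_subset_eq[OF finT'])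
        show "(\<lambda>y. \<theta> * y) ` T' \<subseteq> T'" using Tmul thT th0 unfolding T'_def by auto
        show "card ((\<lambda>y. \<theta> * y) ` T') = card T'" using th0 by (intro card_image) (auto intro: inj_onI)
      qed
      have "(\<Prod>y\<in>T'. \<theta> * y) = (\<Prod>y\<in>(\<lambda>y. \<theta> * y) ` T'. y)"
        using th0 by (subst prod.reindex) (auto intro: inj_onI)
      also have "\<dots> = (\<Prod>y\<in>T'. y)" using img by simp
      finally have "\<theta> ^ card T' * (\<Prod>y\<in>T'. y) = (\<Prod>y\<in>T'. y)" by (simp add: prod.distrib)
      moreover have "(\<Prod>y\<in>T'. y) \<noteq> 0" unfolding T'_def by simp
      ultimately show ?thesis by simp
    qed
    moreover have "card T' = p ^ b - 1" unfolding T'_def using b T0 by (simp add: card_Diff_singleton)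
    ultimately have "c dvd p ^ b - 1" using A by simp
    with prim b1 ba show False unfolding primitive_divisor_def by blast
  qed
  hence "card T = card (UNIV :: 'a set)" using b cF by simp
  hence TU: "T = UNIV" by (intro card_subset_eq) auto
  hence "\<forall>y::'a. \<exists>s. sum_of_kth_powers k s y" unfolding T_def by blast
  then obtain S where S: "\<And>y. sum_of_kth_powers k (S y) (y::'a)" by metis
  define s where "s = Max (range S)"
  have "sum_of_kth_powers k s y" for y :: 'a
    by (rule sok_mono[OF S]) (simp_all add: s_def k0)
  thus ?thesis by blast
qed


lemma waring_transfer:
  fixes k kE c R :: nat and \<phi> :: "'F::{finite,field} \<Rightarrow> 'E::{finite,field}" and \<theta> :: 'E
  assumes R0: "R > 0" and k0: "k > 0" and kE0: "kE > 0"
   and BF: "\<And>y::'F. y ^ c = 1 \<longleftrightarrow> (\<exists>x. x \<noteq> 0 \<and> y = x ^ k)"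
   and BE: "\<And>y::'E. y ^ (c * R) = 1 \<longleftrightarrow> (\<exists>x. x \<noteq> 0 \<and> y = x ^ kE)"
   and S2a: "\<And>y::'E. y ^ (c * R) = 1 \<Longrightarrow> \<exists>i<R. \<exists>g. g ^ c = 1 \<and> y = \<theta> ^ i * \<phi> g"
   and S2b: "\<And>i g. g ^ c = 1 \<Longrightarrow> (\<theta> ^ i * \<phi> g) ^ (c * R) = 1"
   and hadd: "\<And>x y. \<phi> (x + y) = \<phi> x + \<phi> y" and h0: "\<phi> 0 = 0"
   and uniq: "\<And>x y :: nat \<Rightarrow> 'F. (\<Sum>i<R. \<theta> ^ i * \<phi> (x i)) = (\<Sum>i<R. \<theta> ^ i * \<phi> (y i)) \<Longrightarrow> \<forall>i<R. x i = y i"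
   and surj: "\<And>e. \<exists>x. e = (\<Sum>i<R. \<theta> ^ i * \<phi> (x i))"
   and exF: "\<exists>s. \<forall>y::'F. sum_of_kth_powers k s y"
  shows "waring_number kE TYPE('E) = R * waring_number k TYPE('F)"
proof -
  define g where "g = waring_number k TYPE('F)"
  have F1: "sum_of_kth_powers k g y" for y :: 'F
  proof -
    have "\<forall>y::'F. sum_of_kth_powers k g y"
      unfolding g_def waring_number_def using exF by (rule LeastI_ex)
    thus ?thesis by blast
  qed
  have Fmin: "\<not> (\<forall>y::'F. sum_of_kth_powers k s y)" if "s < g" for s
    using that unfolding g_def waring_number_def using not_less_Least by blast
  have g0: "g > 0"
  proof (rule ccontr)
    assume "\<not> g > 0" hence "g = 0" by simp
    hence "sum_of_kth_powers k 0 (1::'F)" using F1 by simp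
    thus False unfolding sok_iff by simp
  qed
  obtain w :: 'F where w: "\<not> sum_of_kth_powers k (g - 1) w" using Fmin[of "g - 1"] g0 by auto
  have wmin: "s \<ge> g" if "sum_of_kth_powers k s w" for s
  proof (rule ccontr)
    assume "\<not> s \<ge> g" hence "s \<le> g - 1" by simp
    from sok_mono[OF that this k0] w show False by simp
  qed
  have phisum: "\<phi> (\<Sum>j\<in>A. f j) = (\<Sum>j\<in>A. \<phi> (f j))" for A and f :: "'b \<Rightarrow> 'F"
    using sum_comp_morphism[of \<phi> f A, OF h0 hadd] by (simp add: o_def)
  have "waring_number kE TYPE('E) = R * g"
  proof (rule waring_eqI)
    fix e :: 'E
    obtain x where ex: "e = (\<Sum>i<R. \<theta> ^ i * \<phi> (x i))" using surj by blast
    have "\<forall>i. \<exists>f::nat \<Rightarrow> 'F. (\<Sum>j<g. f j ^ k) = x i" using F1 sok_iff by blast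
    then obtain Fs :: "nat \<Rightarrow> nat \<Rightarrow> 'F" where Fs: "\<And>i. (\<Sum>j<g. Fs i j ^ k) = x i" by metis
    have "\<forall>i j. \<exists>u::'E. \<theta> ^ i * \<phi> (Fs i j ^ k) = u ^ kE"
    proof (intro allI)
      fix i j
      show "\<exists>u::'E. \<theta> ^ i * \<phi> (Fs i j ^ k) = u ^ kE"
      proof (cases "Fs i j = 0")
        case True thus ?thesis using h0 k0 kE0 by (intro exI[of _ 0]) (simp add: zero_power)
      next
        case False
        hence "(Fs i j ^ k) ^ c = 1" using BF by blast
        hence "(\<theta> ^ i * \<phi> (Fs i j ^ k)) ^ (c * R) = 1" by (rule S2b)
        thus ?thesis using BE by blast
      qed
    qed
    then obtain U :: "nat \<Rightarrow> nat \<Rightarrow> 'E" where U: "\<And>i j. \<theta> ^ i * \<phi> (Fs i j ^ k) = U i j ^ kE" by metis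
    have "e = (\<Sum>i<R. \<Sum>j<g. U i j ^ kE)"
      unfolding ex Fs[symmetric] phisum sum_distrib_left U ..
    also have "\<dots> = (\<Sum>m<R*g. U (m div g) (m mod g) ^ kE)"
      using g0 by (simp add: sum_blocks)
    finally have eqe: "e = (\<Sum>m<R*g. U (m div g) (m mod g) ^ kE)" .
    show "sum_of_kth_powers kE (R * g) e" unfolding sok_iff
      by (intro exI[of _ "\<lambda>m. U (m div g) (m mod g)"]) (simp add: eqe)
  next
    fix s assume all: "\<forall>e::'E. sum_of_kth_powers kE s e"
    define e where "e = (\<Sum>i<R. \<theta> ^ i * \<phi> w)"
    obtain u :: "nat \<Rightarrow> 'E" where u: "(\<Sum>j<s. u j ^ kE) = e" using all sok_iff by blast
    have "\<forall>j. \<exists>i v. i < R \<and> u j ^ kE = \<theta> ^ i * \<phi> (v ^ k)"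
    proof
      fix j
      show "\<exists>i v. i < R \<and> u j ^ kE = \<theta> ^ i * \<phi> (v ^ k)"
      proof (cases "u j = 0")
        case True thus ?thesis using R0 kE0 k0 h0 by (intro exI[of _ 0] exI[of _ 0]) (simp add: zero_power)
      next
        case False
        hence "(u j ^ kE) ^ (c * R) = 1" using BE by blast
        then obtain i h where ih: "i < R" "h ^ c = 1" "u j ^ kE = \<theta> ^ i * \<phi> h" using S2a by blast
        then obtain v where "h = v ^ k" using BF by blast
        thus ?thesis using ih by blast
      qed
    qed
    then obtain \<iota> V where iV: "\<And>j. \<iota> j < R" "\<And>j. u j ^ kE = \<theta> ^ \<iota> j * \<phi> (V j ^ k)" by metis
    define J where "J = (\<lambda>i. {j \<in> {..<s}. \<iota> j = i})"
    have "e = (\<Sum>j<s. \<theta> ^ \<iota> j * \<phi> (V j ^ k))" using u iV(2) by simp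
    also have "\<dots> = (\<Sum>i<R. \<Sum>j\<in>J i. \<theta> ^ \<iota> j * \<phi> (V j ^ k))"
      unfolding J_def by (rule sum.group[symmetric]) (use iV(1) in auto)
    also have "\<dots> = (\<Sum>i<R. \<theta> ^ i * \<phi> (\<Sum>j\<in>J i. V j ^ k))"
      unfolding phisum sum_distrib_left J_def by (rule sum.cong) auto
    finally have "(\<Sum>i<R. \<theta> ^ i * \<phi> ((\<lambda>_. w) i)) = (\<Sum>i<R. \<theta> ^ i * \<phi> ((\<lambda>i. \<Sum>j\<in>J i. V j ^ k) i))"
      unfolding e_def by simp
    from uniq[OF this] have wJ: "\<And>i. i < R \<Longrightarrow> w = (\<Sum>j\<in>J i. V j ^ k)" by simp
    have cardJ: "card (J i) \<ge> g" if "i < R" for i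
    proof -
      have "sum_of_kth_powers k (card (J i)) w"
        unfolding wJ[OF that] by (rule sok_finite_sum) (simp add: J_def)
      thus ?thesis by (rule wmin)
    qed
    have "(\<Sum>i<R. card (J i)) = s"
    proof -
      have "(\<Sum>i<R. \<Sum>j\<in>J i. (1::nat)) = (\<Sum>j<s. (1::nat))"
        unfolding J_def by (rule sum.group) (use iV(1) in auto)
      thus ?thesis by simp
    qed
    moreover have "(\<Sum>i<R. g) \<le> (\<Sum>i<R. card (J i))" by (rule sum_mono) (use cardJ in auto)
    ultimately show "R * g \<le> s" by simp
  qed
  thus ?thesis by (simp add: g_def)
qed


lemma lin_indep:
  fixes \<phi> :: "'F::{finite,field} \<Rightarrow> 'E::{finite,field}" and \<theta> :: 'E and z :: "nat \<Rightarrow> 'F"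
    and p a q R M :: nat
  assumes p: "prime p" and charE: "CHAR('E) = p" and qpa: "q = p ^ a" and q2: "q \<ge> 2"
    and Fq: "\<And>x::'F. x ^ q = x"
    and hmul: "\<And>x y. \<phi> (x * y) = \<phi> x * \<phi> y" and h0: "\<phi> 0 = 0" and h1: "\<phi> 1 = 1" and inj: "inj \<phi>"
    and th0: "\<theta> \<noteq> 0" and ord: "\<And>n. \<theta> ^ n = 1 \<longleftrightarrow> M dvd n" and cop: "coprime M q"
    and noteq: "\<And>d. 0 < d \<Longrightarrow> d < R \<Longrightarrow> \<not> M dvd q ^ d - 1"
    and sum0: "(\<Sum>i<R. \<theta> ^ i * \<phi> (z i)) = 0"
  shows "\<forall>i<R. z i = 0"
proof (rule ccontr)
  assume "\<not> (\<forall>i<R. z i = 0)"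
  then obtain j where j: "j < R" "z j \<noteq> 0" by blast
  define P :: "'E poly" where "P = (\<Sum>i<R. monom (\<phi> (z i)) i)"
  have cP: "coeff P n = (if n < R then \<phi> (z n) else 0)" for n
    unfolding P_def coeff_sum by (simp add: coeff_monom)
  have hpow: "\<phi> (x ^ n) = \<phi> x ^ n" for x n by (induction n) (simp_all add: h1 hmul)
  have P0: "P \<noteq> 0"
  proof
    assume "P = 0"
    hence "\<phi> (z j) = 0" using cP[of j] j by simp
    hence "\<phi> (z j) = \<phi> 0" using h0 by simp
    with inj j show False by (auto dest: injD)
  qed
  have dP: "degree P < R"
  proof -
    have "degree P \<le> R - 1" by (rule degree_le) (auto simp: cP)
    thus ?thesis using j by simp
  qed
  have polyP: "poly P y = (\<Sum>i<R. \<phi> (z i) * y ^ i)" for y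
    unfolding P_def poly_sum by (simp add: poly_monom)
  have Fql: "x ^ (q ^ l) = x" for x :: 'F and l
    by (induction l) (simp_all add: power_mult Fq)
  have root: "poly P (\<theta> ^ (q ^ l)) = 0" for l
  proof -
    have pc: "prime CHAR('E)" using charE p by simp
    have "(poly P \<theta>) ^ (q ^ l) = (\<Sum>i<R. (\<phi> (z i) * \<theta> ^ i) ^ (q ^ l))"
      unfolding polyP by (rule freshmans_dream_sum'[OF pc, where n="a * l"]) (simp add: charE qpa power_mult)
    also have "\<dots> = (\<Sum>i<R. \<phi> (z i) * (\<theta> ^ (q ^ l)) ^ i)"
      by (rule sum.cong) (simp_all add: power_mult_distrib hpow[symmetric] Fql power_mult[symmetric] mult.commute)
    also have "\<dots> = poly P (\<theta> ^ (q ^ l))" unfolding polyP ..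
    finally have eq: "(poly P \<theta>) ^ (q ^ l) = poly P (\<theta> ^ (q ^ l))" .
    have "poly P \<theta> = 0" using sum0 polyP[of \<theta>] by (simp add: mult.commute)
    moreover have "q ^ l > 0" using q2 by simp
    ultimately show ?thesis using eq by (simp add: zero_power)
  qed
  have injl: "inj_on (\<lambda>l. \<theta> ^ (q ^ l)) {..<R}"
  proof -
    have key: False if ll: "l < l'" "l' < R" and eq: "\<theta> ^ (q ^ l) = \<theta> ^ (q ^ l')" for l l'
    proof -
      have le: "q ^ l \<le> q ^ l'" using ll q2 by (simp add: power_increasing)
      have "\<theta> ^ (q ^ l') = \<theta> ^ (q ^ l) * \<theta> ^ (q ^ l' - q ^ l)"
        using le by (simp add: power_add[symmetric])
      hence "\<theta> ^ (q ^ l' - q ^ l) = 1" using eq th0 by simp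
      hence d: "M dvd q ^ l' - q ^ l" using ord by simp
      have "q ^ l' - q ^ l = q ^ l * (q ^ (l' - l) - 1)"
        using ll by (simp add: diff_mult_distrib2 power_add[symmetric])
      with d have "M dvd q ^ l * (q ^ (l' - l) - 1)" by simp
      moreover have "coprime M (q ^ l)" using cop by simp
      ultimately have "M dvd q ^ (l' - l) - 1" by (simp add: coprime_dvd_mult_right_iff)
      with noteq[of "l' - l"] ll show False by simp
    qed
    show ?thesis
    proof (rule inj_onI)
      fix l l' assume "l \<in> {..<R}" "l' \<in> {..<R}" "\<theta> ^ (q ^ l) = \<theta> ^ (q ^ l')"
      thus "l = l'" using key[of l l'] key[of l' l] by (cases l l' rule: linorder_cases) auto
    qed
  qed
  have "(\<lambda>l. \<theta> ^ (q ^ l)) ` {..<R} \<subseteq> {x. poly P x = 0}" using root by auto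
  hence "card ((\<lambda>l. \<theta> ^ (q ^ l)) ` {..<R}) \<le> card {x. poly P x = 0}"
    by (intro card_mono poly_roots_finite P0)
  moreover have "card ((\<lambda>l. \<theta> ^ (q ^ l)) ` {..<R}) = R" using injl by (simp add: card_image)
  moreover have "card {x. poly P x = 0} \<le> degree P" by (rule card_poly_roots_bound[OF P0])
  ultimately show False using dP by simp
qed


theorem mainTheorem14:
  fixes p r a c t :: nat
  assumes "prime p" and "prime r" and "r \<noteq> p"
    and "a > 0" and "c > 0" and "t \<ge> 2"
    and "primitive_divisor c p a"
    and "coprime ((p ^ a - 1) div c) r"
    and "(r = 2 \<and> [p ^ a = 1] (mod 4)) \<or>
         (odd r \<and> (\<exists>h. h \<le> t - 1 \<and> ord (r ^ t) (p ^ a) = r ^ h))"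
    and "card (UNIV :: 'F::{finite,field} set) = p ^ a"
    and "card (UNIV :: 'E::{finite,field} set) = p ^ (a * r ^ t)"
  shows "waring_number ((p ^ (a * r ^ t) - 1) div (c * r ^ t)) TYPE('E)
         = r ^ t * waring_number ((p ^ a - 1) div c) TYPE('F)"
proof -
  note p = assms(1) and r = assms(2) and rp = assms(3) and a0 = assms(4) and c0 = assms(5)
    and t2 = assms(6) and prim = assms(7) and cop = assms(8) and cond = assms(9)
    and cF = assms(10) and cE = assms(11)
  define q where "q = p ^ a"
  define R where "R = r ^ t"
  define Q where "Q = p ^ (a * r ^ t)"
  have p1: "p > 1" using prime_gt_1_nat[OF p] .
  have q2: "q \<ge> 2"
  proof -
    have "p ^ 1 \<le> p ^ a" using a0 p1 by (intro power_increasing) auto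
    thus ?thesis using p1 unfolding q_def by simp
  qed
  have QqR: "Q = q ^ R" unfolding Q_def q_def R_def by (simp add: power_mult)
  have R0: "R > 0" unfolding R_def using prime_gt_0_nat[OF r] by simp
  have cdvd: "c dvd q - 1" using prim unfolding primitive_divisor_def q_def by blast
  have rnq: "\<not> r dvd q"
  proof
    assume "r dvd q"
    hence "r dvd p" using r unfolding q_def by (meson prime_dvd_power)
    hence "r = p" using r p primes_dvd_imp_eq by blast
    with rp show False by simp
  qed
  have rq: "r dvd q - 1 \<and> (r = 2 \<longrightarrow> 4 dvd q - 1)"
    using cond
  proof
    assume A: "r = 2 \<and> [p ^ a = 1] (mod 4)"
    hence "4 dvd q - 1" using q2 unfolding q_def by (subst (asm) cong_altdef_nat) auto
    moreover have "2 dvd (4::nat)" by simp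
    ultimately show ?thesis using A by (meson dvd_trans)
  next
    assume B: "odd r \<and> (\<exists>h. h \<le> t - 1 \<and> ord (r ^ t) (p ^ a) = r ^ h)"
    then obtain h where h: "ord (r ^ t) q = r ^ h" unfolding q_def by blast
    have "[q ^ (ord (r ^ t) q) = 1] (mod r ^ t)" by (rule ord)
    moreover have rt: "r dvd r ^ t" using t2 by (simp add: dvd_power)
    ultimately have "[q ^ (r ^ h) = 1] (mod r)" unfolding h using cong_dvd_modulus_nat by blast
    hence o1: "ord r q dvd r ^ h" by (simp add: ord_divides')
    have "[q ^ (r - 1) = 1] (mod r)" by (rule fermat_theorem[OF r rnq])
    hence o2: "ord r q dvd r - 1" by (simp add: ord_divides')
    have "coprime (r ^ h) (r - 1)"
    proof -
      have "coprime r (r - 1)"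
      proof (rule coprimeI)
        fix d assume d: "d dvd r" "d dvd r - 1"
        have "r - (r - 1) = 1" using prime_gt_0_nat[OF r] by simp
        hence "d dvd 1" using dvd_diff_nat[OF d(1) d(2)] by simp
        thus "is_unit d" by simp
      qed
      thus ?thesis by simp
    qed
    hence "is_unit (ord r q)" using o1 o2 by (rule coprime_common_divisor)
    hence "ord r q dvd 1" by simp
    hence "ord r q = Suc 0" by simp
    hence "[q = 1] (mod r)" by (simp add: ord_eq_Suc_0_iff)
    hence "r dvd q - 1" using q2 by (subst (asm) cong_altdef_nat) auto
    moreover have "r \<noteq> 2" using B by auto
    ultimately show ?thesis by simp
  qed
  have t1: "t \<ge> 1" using t2 by simp
  have cop': "coprime ((q - 1) div c) r" using cop unfolding q_def .
  have NA: "c * R dvd q ^ R - 1" and NB: "\<And>d. 0 < d \<Longrightarrow> d < R \<Longrightarrow> \<not> c * R dvd q ^ d - 1"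
    using nt_main[OF r q2 t1 c0 cdvd cop'] rq unfolding R_def by auto
  define k where "k = (q - 1) div c"
  define kE where "kE = (Q - 1) div (c * R)"
  have cardF: "card (UNIV :: 'F set) = q" using cF q_def by simp
  have cardE: "card (UNIV :: 'E set) = Q" using cE Q_def by simp
  have kc: "k * c = card (UNIV :: 'F set) - 1" unfolding k_def cardF using cdvd by simp
  have kEc: "kE * (c * R) = card (UNIV :: 'E set) - 1" unfolding kE_def cardE QqR using NA by simp
  have kEc2: "(kE * R) * c = card (UNIV :: 'E set) - 1" using kEc by (simp add: algebra_simps)
  have Q2: "Q \<ge> 2" using cardE ff_card_ge2[where 'a='E] by simp
  have k0: "k > 0" using kc q2 cardF by (cases k) auto
  have kE0: "kE > 0" using kEc Q2 cardE by (cases kE) auto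
  obtain \<theta>F :: 'F where BF: "\<And>y::'F. y ^ c = 1 \<longleftrightarrow> (\<exists>x. x \<noteq> 0 \<and> y = x ^ k)"
    and cardGF: "card {y::'F. y ^ c = 1} = c"
    by (rule ff_subgroup[OF kc]) blast
  obtain \<theta> :: 'E where AE: "\<And>n. \<theta> ^ n = 1 \<longleftrightarrow> c * R dvd n"
    and BE: "\<And>y::'E. y ^ (c * R) = 1 \<longleftrightarrow> (\<exists>x. x \<noteq> 0 \<and> y = x ^ kE)"
    and CE: "\<And>y::'E. y ^ (c * R) = 1 \<Longrightarrow> \<exists>i<c * R. y = \<theta> ^ i"
    by (rule ff_subgroup[OF kEc]) blast
  obtain \<theta>2 :: 'E where cardGE: "card {y::'E. y ^ c = 1} = c"
    by (rule ff_subgroup[OF kEc2]) blast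
  have cardE': "card (UNIV :: 'E set) = (p ^ a) ^ R" using cardE QqR q_def by simp
  obtain \<phi> :: "'F \<Rightarrow> 'E" where inj: "inj \<phi>" and hadd: "\<And>x y. \<phi> (x + y) = \<phi> x + \<phi> y"
    and hmul: "\<And>x y. \<phi> (x * y) = \<phi> x * \<phi> y" and h0: "\<phi> 0 = 0" and h1: "\<phi> 1 = 1"
    by (rule embedding[OF p cF cardE']) blast
  have hpow: "\<phi> (x ^ n) = \<phi> x ^ n" for x n by (induction n) (simp_all add: h1 hmul)
  have hdiff: "\<phi> (x - y) = \<phi> x - \<phi> y" for x y
    using hadd[of "x - y" y] by (simp add: algebra_simps)
  have th0: "\<theta> \<noteq> 0"
  proof
    assume "\<theta> = 0"
    hence "\<theta> ^ (c * R) = 0" using c0 R0 by (simp add: zero_power)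
    moreover have "\<theta> ^ (c * R) = 1" using AE by simp
    ultimately show False by simp
  qed
  have img: "\<phi> ` {g::'F. g ^ c = 1} = {z::'E. z ^ c = 1}"
  proof (rule card_subset_eq)
    show "finite {z::'E. z ^ c = 1}" by simp
    show "\<phi> ` {g::'F. g ^ c = 1} \<subseteq> {z::'E. z ^ c = 1}" by (auto simp: hpow[symmetric] h1)
    show "card (\<phi> ` {g::'F. g ^ c = 1}) = card {z::'E. z ^ c = 1}"
      using inj cardGF cardGE by (simp add: card_image inj_on_subset[OF inj])
  qed
  have S2a: "\<exists>i<R. \<exists>g. g ^ c = 1 \<and> y = \<theta> ^ i * \<phi> g" if y: "y ^ (c * R) = 1" for y :: 'E
  proof -
    obtain m where m: "y = \<theta> ^ m" using CE[OF y] by blast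
    define z where "z = \<theta> ^ (R * (m div R))"
    have "z ^ c = \<theta> ^ (c * R * (m div R))" unfolding z_def by (simp add: power_mult[symmetric] algebra_simps)
    hence "z ^ c = 1" using AE by simp
    hence "z \<in> \<phi> ` {g::'F. g ^ c = 1}" using img by simp
    then obtain g where g: "g ^ c = 1" "z = \<phi> g" by blast
    have "y = \<theta> ^ (R * (m div R)) * \<theta> ^ (m mod R)"
      unfolding m power_add[symmetric] by (simp only: mult_div_mod_eq)
    hence "y = \<theta> ^ (m mod R) * z" unfolding z_def by (simp add: mult.commute)
    thus ?thesis using g R0 by (intro exI[of _ "m mod R"]) auto
  qed
  have S2b: "(\<theta> ^ i * \<phi> g) ^ (c * R) = 1" if g: "g ^ c = 1" for i g
  proof -
    have "(\<theta> ^ i) ^ (c * R) = 1" using AE by (simp add: power_mult[symmetric])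
    moreover have "(\<phi> g) ^ (c * R) = 1" using g by (simp add: power_mult hpow[symmetric] h1)
    ultimately show ?thesis by (simp add: power_mult_distrib)
  qed
  have charE: "CHAR('E) = p" by (rule ff_char[OF p cE])
  have Fq: "x ^ q = x" for x :: 'F using ff_fermat[of x] cardF by simp
  have copM: "coprime (c * R) q"
  proof -
    have "c * R dvd q ^ R - 1" by (rule NA)
    moreover have "coprime (q ^ R - 1) q"
    proof (rule coprimeI)
      fix d assume d: "d dvd q ^ R - 1" "d dvd q"
      have "q dvd q ^ R" using R0 by (simp add: dvd_power)
      hence "d dvd q ^ R" using d(2) by (rule dvd_trans[rotated])
      moreover have "q ^ R - (q ^ R - 1) = 1" using q2 by simp
      ultimately have "d dvd 1" using dvd_diff_nat[of d "q ^ R" "q ^ R - 1"] d(1) by simp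
      thus "is_unit d" by simp
    qed
    ultimately show ?thesis
    proof -
      assume a1: "c * R dvd q ^ R - 1" and a2: "coprime (q ^ R - 1) q"
      show ?thesis
      proof (rule coprimeI)
        fix d assume "d dvd c * R" "d dvd q"
        moreover from this(1) a1 have "d dvd q ^ R - 1" by (rule dvd_trans)
        ultimately show "is_unit d" using coprime_common_divisor[OF a2] by blast
      qed
    qed
  qed
  have uniq: "\<forall>i<R. x i = y i" if eq: "(\<Sum>i<R. \<theta> ^ i * \<phi> (x i)) = (\<Sum>i<R. \<theta> ^ i * \<phi> (y i))"
    for x y :: "nat \<Rightarrow> 'F"
  proof -
    have "(\<Sum>i<R. \<theta> ^ i * \<phi> (x i - y i)) = 0"
      using eq by (simp add: hdiff right_diff_distrib sum_subtractf)
    from lin_indep[OF p charE q_def q2 Fq hmul h0 h1 inj th0 AE copM NB this]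
    show ?thesis by simp
  qed
  have surj: "\<exists>x. e = (\<Sum>i<R. \<theta> ^ i * \<phi> (x i))" for e :: 'E
  proof -
    define V where "V = (\<lambda>x::nat \<Rightarrow> 'F. \<Sum>i<R. \<theta> ^ i * \<phi> (x i))"
    define A where "A = PiE {..<R} (\<lambda>_. UNIV :: 'F set)"
    have cA: "card A = card (UNIV :: 'E set)" unfolding A_def cardE' by (simp add: card_PiE cF)
    have injV: "inj_on V A"
    proof (rule inj_onI)
      fix x y assume xy: "x \<in> A" "y \<in> A" "V x = V y"
      hence "\<forall>i<R. x i = y i" using uniq unfolding V_def by blast
      thus "x = y" using xy(1,2) unfolding A_def by (intro PiE_ext) auto
    qed
    have "V ` A = UNIV"
      by (rule card_subset_eq) (use cA injV in \<open>simp_all add: card_image\<close>)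
    hence "e \<in> V ` A" by simp
    thus ?thesis unfolding V_def by blast
  qed
  have exF: "\<exists>s. \<forall>y::'F. sum_of_kth_powers k s y" by (rule waring_exists[OF p cF kc prim])
  have "waring_number kE TYPE('E) = R * waring_number k TYPE('F)"
    by (rule waring_transfer[OF R0 k0 kE0 BF BE S2a S2b hadd h0 uniq surj exF])
  thus ?thesis unfolding kE_def k_def Q_def R_def q_def .
qed


end
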